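(* Let $H$ be a $4$-tournament on $7$ vertices and let $C=v_1b_1v_2\dots v_7b_7v_1$ be a Hamiltonian cycle of $H$. Then any two different pairs of vertices, each consisting of two vertices that are not consecutive on $C$, are simultaneously contained in at most four of the hyperarcs $b_1,\dots,b_7$.
   Context: For $2\le k\le n$, a $k$-tournament $H$ on $n$ vertices is a pair $(V,A)$ where $V$ is a set of $n$ vertices and $A$ is a set of $k$-tuples of distinct vertices (hyperarcs) such that for every $k$-subset $S\subseteq V$, $A$ contains exactly one of the $k!$ orderings of $S$. For a hyperarc $a=(x_1\dots x_k)$, $x_i$ precedes $x_j$ if $i<j$. A Hamiltonian cycle is an alternating sequence $v_1b_1v_2\dots v_nb_nv_1$ of all $n$ distinct vertices and $n$ distinct hyperarcs such that $v_i$ precedes $v_{i+1}$ in $b_i$ (indices mod $n$). Two vertices are consecutive on $C$ if they are $v_i,v_{i+1}$ for some $i$ (mod $7$). A pair is contained in a hyperarc if both its vertices belong to the vertex set of the hyperarc. *)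

theory Defs
  imports Main
begin

definition k_tournament :: "nat \<Rightarrow> 'a set \<Rightarrow> 'a list set \<Rightarrow> bool" where
  "k_tournament k V A \<longleftrightarrow>
     finite V \<and> 2 \<le> k \<and> k \<le> card V \<and>
     (\<forall>a\<in>A. distinct a \<and> length a = k \<and> set a \<subseteq> V) \<and>
     (\<forall>S. S \<subseteq> V \<and> card S = k \<longrightarrow> (\<exists>!a. a \<in> A \<and> set a = S))"

definition precedes :: "'a \<Rightarrow> 'a \<Rightarrow> 'a list \<Rightarrow> bool" where
  "precedes x y a \<longleftrightarrow> (\<exists>i j. i < j \<and> j < length a \<and> a ! i = x \<and> a ! j = y)"

text \<open>Hamiltonian cycle v_0 b_0 v_1 ... v_{n-1} b_{n-1} v_0 (indices 0-based, mod n).\<close>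

definition ham_cycle :: "'a set \<Rightarrow> 'a list set \<Rightarrow> (nat \<Rightarrow> 'a) \<Rightarrow> (nat \<Rightarrow> 'a list) \<Rightarrow> bool" where
  "ham_cycle V A v b \<longleftrightarrow>
     (let n = card V in
       bij_betw v {..<n} V \<and> inj_on b {..<n} \<and> b ` {..<n} \<subseteq> A \<and>
       (\<forall>i<n. precedes (v i) (v (Suc i mod n)) (b i)))"

definition consecutive :: "nat \<Rightarrow> (nat \<Rightarrow> 'a) \<Rightarrow> 'a \<Rightarrow> 'a \<Rightarrow> bool" where
  "consecutive n v x y \<longleftrightarrow> (\<exists>i<n. (x = v i \<and> y = v (Suc i mod n)) \<or> (y = v i \<and> x = v (Suc i mod n)))"

end

theory Submission
  imports Defs
begin

theorem lemma3:
  fixes V :: "'a set" and A :: "'a list set" and v :: "nat \<Rightarrow> 'a" and b :: "nat \<Rightarrow> 'a list"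
    and x y z w :: 'a
  assumes "k_tournament 4 V A" and "card V = 7"
    and "ham_cycle V A v b"
    and "x \<in> V" "y \<in> V" "z \<in> V" "w \<in> V" "x \<noteq> y" "z \<noteq> w"
    and "{x, y} \<noteq> {z, w}"
    and "\<not> consecutive 7 v x y" and "\<not> consecutive 7 v z w"
  shows "card {i. i < 7 \<and> {x, y, z, w} \<subseteq> set (b i)} \<le> 4"
proof -
  define T where "T = {x, y, z, w}"
  define I where "I = {i. i < 7 \<and> T \<subseteq> set (b i)}"
  have finV: "finite V" and arcs: "\<forall>a\<in>A. distinct a \<and> length a = 4 \<and> set a \<subseteq> V"
    and uniq: "\<forall>S. S \<subseteq> V \<and> card S = 4 \<longrightarrow> (\<exists>!a. a \<in> A \<and> set a = S)"
    using assms(1) unfolding k_tournament_def by simp_all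
  have injb: "inj_on b {..<7}" and bA: "b ` {..<7} \<subseteq> A"
    using assms(3) unfolding ham_cycle_def Let_def assms(2) by simp_all
  have TV: "T \<subseteq> V" using assms(4-7) T_def by auto
  have finT: "finite T" using T_def by auto
  have cT: "card T \<ge> 3"
  proof -
    have "\<exists>a c d. {a, c, d} \<subseteq> T \<and> a \<noteq> c \<and> a \<noteq> d \<and> c \<noteq> d"
    proof (cases "z \<in> {x, y}")
      case False then show ?thesis using assms(8) unfolding T_def by (intro exI[of _ x] exI[of _ y] exI[of _ z]) auto
    next
      case True
      show ?thesis
      proof (cases "w \<in> {x, y}")
        case False then show ?thesis using assms(8) unfolding T_def by (intro exI[of _ x] exI[of _ y] exI[of _ w]) auto
      next
        case True2: True
        then have False using True assms(8-10) by auto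
        then show ?thesis ..
      qed
    qed
    then obtain a c d where "{a, c, d} \<subseteq> T" "a \<noteq> c" "a \<noteq> d" "c \<noteq> d" by blast
    then have "card {a, c, d} \<le> card T" using finT card_mono by blast
    then show ?thesis using \<open>a \<noteq> c\<close> \<open>a \<noteq> d\<close> \<open>c \<noteq> d\<close> by simp
  qed
  have cT4: "card T \<le> 4"
  proof -
    have "T = set [x, y, z, w]" unfolding T_def by simp
    then show ?thesis using card_length[of "[x, y, z, w]"] by simp
  qed
  define F where "F = {S. S \<subseteq> V \<and> T \<subseteq> S \<and> card S = 4}"
  have inj: "inj_on (\<lambda>i. set (b i)) I"
  proof (rule inj_onI)
    fix i j assume i: "i \<in> I" and j: "j \<in> I" and eq: "set (b i) = set (b j)"
    have iA: "b i \<in> A" and jA: "b j \<in> A" using i j bA I_def by auto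
    have "card (set (b i)) = 4" "set (b i) \<subseteq> V"
      using arcs iA distinct_card by fastforce+
    then have "\<exists>!a. a \<in> A \<and> set a = set (b i)" using uniq by blast
    then have "b i = b j" using iA jA eq by blast
    then show "i = j" using injb i j I_def by (auto dest: inj_onD)
  qed
  have sub: "(\<lambda>i. set (b i)) ` I \<subseteq> F"
  proof
    fix S assume "S \<in> (\<lambda>i. set (b i)) ` I"
    then obtain i where i: "i \<in> I" "S = set (b i)" by auto
    have iA: "b i \<in> A" using i bA I_def by auto
    then show "S \<in> F" using arcs i I_def F_def distinct_card by fastforce
  qed
  have finF: "finite F" using finV F_def by (auto intro: finite_subset[of _ "Pow V"])
  have cF: "card F \<le> 4"
  proof (cases "card T = 4")
    case True
    have "F \<subseteq> {T}"
    proof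
      fix S assume "S \<in> F"
      then have "S \<subseteq> V" "T \<subseteq> S" "card S = 4" using F_def by auto
      then have "finite S" using finV finite_subset by blast
      then have "T = S" using card_subset_eq[of S T] \<open>T \<subseteq> S\<close> \<open>card S = 4\<close> True by simp
      then show "S \<in> {T}" by simp
    qed
    then have "card F \<le> card {T}" by (intro card_mono) auto
    then have "card F \<le> 1" by simp
    then show ?thesis by simp
  next
    case False
    then have c3: "card T = 3" using cT cT4 by simp
    have "F \<subseteq> (\<lambda>u. insert u T) ` (V - T)"
    proof
      fix S assume S: "S \<in> F"
      then have SV: "S \<subseteq> V" "T \<subseteq> S" "card S = 4" using F_def by auto
      have finS: "finite S" using finite_subset[OF SV(1) finV] .
      have "card (S - T) = 1" using card_Diff_subset[OF finT SV(2)] SV(3) c3 by simp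
      then obtain u where u: "S - T = {u}" by (auto simp: card_1_singleton_iff)
      have "S = insert u T" using u SV(2) by auto
      moreover have "u \<in> V - T" using u SV(1) by auto
      ultimately show "S \<in> (\<lambda>u. insert u T) ` (V - T)" by (rule rev_image_eqI[rotated])
    qed
    then have "card F \<le> card ((\<lambda>u. insert u T) ` (V - T))"
      using finV by (intro card_mono) auto
    also have "\<dots> \<le> card (V - T)" by (rule card_image_le) (simp add: finV)
    also have "\<dots> = 4" using card_Diff_subset[OF finT TV] assms(2) c3 by simp
    finally show ?thesis .
  qed
  have "card I = card ((\<lambda>i. set (b i)) ` I)" using card_image[OF inj] by simp
  also have "\<dots> \<le> card F" using card_mono[OF finF sub] .
  finally show ?thesis using cF unfolding I_def T_def by simp
qed

end
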